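(* Let $\mathcal H$ and $\mathcal H'$ be the rank-one-root affine Hecke algebras described in the context. There is no algebra homomorphism $I:\mathcal H\to\mathcal H'$ such that $I(T_s)=c'\theta_{k(\alpha')^\vee}T_{s'}+b'$ for some $c'\in\mathbb C^\times$, $b'\in\mathbb C[Y']$ and half-integer $k\in\frac12+\mathbb Z$, and $I(\theta_{\alpha^\vee})=c\,\theta_{n(\alpha')^\vee}$ for some $c\in\mathbb C^\times$ and $n\in\frac12\mathbb Z_{>0}$ (here $k(\alpha')^\vee,n(\alpha')^\vee\in Y'$).
   Context: Let $\mathcal R=(X,R=\{\pm\alpha\},Y,R^\vee=\{\pm\alpha^\vee\},\Delta=\{\alpha\})$ and $\mathcal R'=(X',\{\pm\alpha'\},Y',\{\pm(\alpha')^\vee\},\{\alpha'\})$ be based root data (free $\mathbb Z$-modules of finite rank in perfect pairing, $\langle\alpha,\alpha^\vee\rangle=2$). Let $\lambda(\alpha),\lambda^*(\alpha),\lambda'(\alpha'),(\lambda^* )'(\alpha')$ be positive reals with $\lambda(\alpha)=\lambda^*(\alpha)$ unless $\alpha\in2X$ and $\lambda'(\alpha')=(\lambda^* )'(\alpha')$ unless $\alpha'\in2X'$. Fix $\mathbf q>1$; $q_1=\mathbf q^{\lambda(\alpha)}$, $q_0=\mathbf q^{\lambda^*(\alpha)}$, $q_1'=\mathbf q^{\lambda'(\alpha')}$, $q_0'=\mathbf q^{(\lambda^* )'(\alpha')}$. $s=s_\alpha$, $s'=s_{\alpha'}$. $\mathcal H=\mathbb C[Y]\otimes\mathcal H(W_0,q)$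 with $\mathbb C[Y]$ (basis $\theta_y$) and $\operatorname{span}(1,T_s)$, $(T_s+1)(T_s-q_1)=0$, as subalgebras and $\theta_yT_s-T_s\theta_{s(y)}=\big((q_1-1)+\theta_{-\alpha^\vee}(q_1^{1/2}q_0^{1/2}-q_1^{1/2}q_0^{-1/2})\big)\frac{\theta_y-\theta_{s(y)}}{\theta_0-\theta_{-2\alpha^\vee}}$; $\mathcal H'$ likewise from $\mathcal R',q_1',q_0'$ with generator $T_{s'}$. *)

theory Defs
  imports Complex_Main "HOL-Library.Poly_Mapping" "HOL-Analysis.Finite_Cartesian_Product"
begin

text \<open>Lattices X = Y = int^n (free Z-modules of finite rank), in perfect pairing via the
  standard dot product.  The group algebra C[Y] is the ring of finitely supported functions
  Y => complex with convolution product (Poly_Mapping); theta y is the basis element.\<close>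

definition pairing :: "int ^ 'n \<Rightarrow> int ^ 'n \<Rightarrow> int" where
  "pairing x y = (\<Sum>i\<in>UNIV. x $ i * y $ i)"

definition theta :: "int ^ 'n \<Rightarrow> (int ^ 'n \<Rightarrow>\<^sub>0 complex)" where
  "theta y = Poly_Mapping.single y 1"

definition cst :: "complex \<Rightarrow> (int ^ 'n \<Rightarrow>\<^sub>0 complex)" where
  "cst c = Poly_Mapping.single 0 c"

definition sref :: "int ^ 'n \<Rightarrow> int ^ 'n \<Rightarrow> int ^ 'n \<Rightarrow> int ^ 'n" where
  "sref a av y = (\<chi> i. y $ i - pairing a y * av $ i)"

definition refl_alg :: "int ^ 'n \<Rightarrow> int ^ 'n \<Rightarrow> (int ^ 'n \<Rightarrow>\<^sub>0 complex) \<Rightarrow> (int ^ 'n \<Rightarrow>\<^sub>0 complex)" where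
  "refl_alg a av f = (\<Sum>y\<in>Poly_Mapping.keys f. cst (Poly_Mapping.lookup f y) * theta (sref a av y))"

text \<open>Delta(f) = ((q1-1) + theta_{-av}(q1^(1/2) q0^(1/2) - q1^(1/2) q0^(-1/2)))
   * (f - s f) / (theta_0 - theta_{-2 av}), the quotient taken in C[Y].
   Bernstein relation: f T_s - T_s s(f) = Delta f.\<close>
definition Delta :: "int ^ 'n \<Rightarrow> int ^ 'n \<Rightarrow> real \<Rightarrow> real \<Rightarrow> (int ^ 'n \<Rightarrow>\<^sub>0 complex) \<Rightarrow> (int ^ 'n \<Rightarrow>\<^sub>0 complex)" where
  "Delta a av q1 q0 f = (THE h. h * (theta 0 - theta (- (av + av))) =
      (cst (of_real (q1 - 1)) + theta (- av) * cst (of_real (sqrt q1 * sqrt q0 - sqrt q1 / sqrt q0)))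
      * (f - refl_alg a av f))"

text \<open>Elements of H = C[Y] (x) H(W_0,q) are pairs (f, g) standing for f + g T_s.
  Using T_s c = s(c) T_s - Delta(s c) and T_s^2 = (q1-1) T_s + q1 one gets the product below.\<close>
type_synonym ('n) hecke = "(int ^ 'n \<Rightarrow>\<^sub>0 complex) \<times> (int ^ 'n \<Rightarrow>\<^sub>0 complex)"

definition hmult :: "int ^ 'n \<Rightarrow> int ^ 'n \<Rightarrow> real \<Rightarrow> real \<Rightarrow> ('n::finite) hecke \<Rightarrow> ('n::finite) hecke \<Rightarrow> 'n hecke" where
  "hmult a av q1 q0 x z = (case x of (f, g) \<Rightarrow> case z of (c, d) \<Rightarrow>
     (f * c - g * Delta a av q1 q0 (refl_alg a av c) + cst (of_real q1) * g * refl_alg a av d,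
      f * d + g * refl_alg a av c + cst (of_real (q1 - 1)) * g * refl_alg a av d
        - g * Delta a av q1 q0 (refl_alg a av d)))"

definition hadd :: "('n::finite) hecke \<Rightarrow> ('n::finite) hecke \<Rightarrow> 'n hecke" where
  "hadd x z = (fst x + fst z, snd x + snd z)"

definition hscale :: "complex \<Rightarrow> ('n::finite) hecke \<Rightarrow> 'n hecke" where
  "hscale c x = (cst c * fst x, cst c * snd x)"

definition hone :: "('n::finite) hecke" where
  "hone = (theta 0, 0)"

definition hT :: "('n::finite) hecke" where
  "hT = (0, theta 0)"

definition htheta :: "int ^ 'n \<Rightarrow> 'n hecke" where
  "htheta y = (theta y, 0)"

definition is_alg_hom ::
  "(('n::finite) hecke \<Rightarrow> ('n::finite) hecke \<Rightarrow> 'n hecke) \<Rightarrow> (('m::finite) hecke \<Rightarrow> ('m::finite) hecke \<Rightarrow> ('m::finite) hecke) \<Rightarrow> (('n::finite) hecke \<Rightarrow> ('m::finite) hecke) \<Rightarrow> bool" where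
  "is_alg_hom mul mul' I \<longleftrightarrow>
     (\<forall>x z. I (hadd x z) = hadd (I x) (I z)) \<and>
     (\<forall>c x. I (hscale c x) = hscale c (I x)) \<and>
     (\<forall>x z. I (mul x z) = mul' (I x) (I z)) \<and>
     I hone = hone"

end

theory Submission
  imports Defs
begin

lemma update_eq_add:
  "a \<notin> Poly_Mapping.keys f \<Longrightarrow> Poly_Mapping.update a b f = f + Poly_Mapping.single a b"
  by (rule poly_mapping_eqI) (auto simp: lookup_update lookup_add lookup_single when_def in_keys_iff)

definition ev :: "('a::monoid_add \<Rightarrow> complex) \<Rightarrow> ('a \<Rightarrow>\<^sub>0 complex) \<Rightarrow> complex" where
  "ev \<sigma> f = (\<Sum>k\<in>Poly_Mapping.keys f. Poly_Mapping.lookup f k * \<sigma> k)"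

lemma ev_add: "ev \<sigma> (f + g) = ev \<sigma> f + ev \<sigma> g"
  unfolding ev_def by (rule setsum_keys_plus_distrib) (auto simp: algebra_simps)

lemma ev_zero [simp]: "ev \<sigma> 0 = 0"
  by (simp add: ev_def)

lemma ev_single [simp]: "ev \<sigma> (Poly_Mapping.single k v) = v * \<sigma> k"
  by (simp add: ev_def)

lemma ev_uminus: "ev \<sigma> (- f) = - ev \<sigma> f"
proof -
  have "ev \<sigma> (f + - f) = 0" by simp
  then show ?thesis by (simp only: ev_add) (simp add: eq_neg_iff_add_eq_0 add.commute)
qed

lemma ev_diff: "ev \<sigma> (f - g) = ev \<sigma> f - ev \<sigma> g"
  using ev_add[of \<sigma> f "- g"] ev_uminus[of \<sigma> g] by simp

lemma ev_mult_single:
  assumes hom: "\<And>x y. \<sigma> (x + y) = \<sigma> x * \<sigma> y"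
  shows "ev \<sigma> (Poly_Mapping.single a b * g) = b * \<sigma> a * ev \<sigma> g"
proof (induction g rule: update_induct)
  case const
  then show ?case by simp
next
  case (update f a' b')
  then show ?case
    by (simp add: update_eq_add distrib_left ev_add mult_single hom algebra_simps)
qed

lemma ev_mult:
  assumes hom: "\<And>x y. \<sigma> (x + y) = \<sigma> x * \<sigma> y"
  shows "ev \<sigma> (f * g) = ev \<sigma> f * ev \<sigma> g"
proof (induction f rule: update_induct)
  case const
  then show ?case by simp
next
  case (update f a b)
  then show ?case
    by (simp add: update_eq_add distrib_right ev_add ev_mult_single[OF hom] algebra_simps)
qed

lemma ev_power:
  assumes hom: "\<And>x y. \<sigma> (x + y) = \<sigma> x * \<sigma> y" and "\<sigma> 0 = 1"
  shows "ev \<sigma> (f ^ n) = ev \<sigma> f ^ n"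
  by (induction n) (simp_all add: ev_mult[OF hom] assms(2) flip: single_one)

lemma lookup_mult_single1:
  fixes h :: "'a::ab_group_add \<Rightarrow>\<^sub>0 complex"
  shows "Poly_Mapping.lookup (h * Poly_Mapping.single y 1) x = Poly_Mapping.lookup h (x - y)"
proof (induction h arbitrary: x rule: update_induct)
  case const
  then show ?case by simp
next
  case (update f a b)
  then show ?case
    by (auto simp: update_eq_add distrib_right mult_single lookup_add lookup_single when_def)
qed

lemma zd:
  fixes h :: "int ^ 'n \<Rightarrow>\<^sub>0 complex"
  assumes "y \<noteq> 0" and "h * (1 - Poly_Mapping.single y 1) = 0"
  shows "h = 0"
proof (rule ccontr)
  assume hne: "h \<noteq> 0"
  have heq: "h = h * Poly_Mapping.single y 1" using assms(2) by (simp add: algebra_simps)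
  have sh: "Poly_Mapping.lookup h z = Poly_Mapping.lookup h (z - y)" for z
    using lookup_mult_single1[of h y z] heq by simp
  obtain i where yi: "y $ i \<noteq> 0" using assms(1) by (metis vec_eq_iff zero_index)
  define v where "v = (if y $ i > 0 then - y else y)"
  have vi: "v $ i < 0" using yi by (auto simp: v_def)
  have shv: "Poly_Mapping.lookup h (z + v) = Poly_Mapping.lookup h z" for z
    using sh[of z] sh[of "z + y"] by (auto simp: v_def)
  define m where "m = Min ((\<lambda>z. z $ i) ` Poly_Mapping.keys h)"
  have ne: "Poly_Mapping.keys h \<noteq> {}" using hne by simp
  have "m \<in> (\<lambda>z. z $ i) ` Poly_Mapping.keys h" unfolding m_def
    using ne finite_keys by (intro Min_in) auto
  then obtain x where x: "x \<in> Poly_Mapping.keys h" "x $ i = m" by auto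
  then have "x + v \<in> Poly_Mapping.keys h" using shv[of x] by (simp add: in_keys_iff)
  then have "(x + v) $ i \<in> (\<lambda>z. z $ i) ` Poly_Mapping.keys h" by blast
  then have "m \<le> (x + v) $ i" unfolding m_def by (rule Min_le[OF finite_imageI[OF finite_keys]])
  then show False using x vi by simp
qed


lemma theta_mult: "theta y * theta z = theta (y + z)"
  by (simp add: theta_def mult_single)

lemma theta0: "theta 0 = 1"
  by (simp add: theta_def)

lemma theta_pow: "theta y ^ n = theta (\<chi> i. of_nat n * y $ i)"
proof (induction n)
  case 0
  then show ?case by (simp add: theta0 flip: zero_vec_def)
next
  case (Suc n)
  have e: "y + (\<chi> i. of_nat n * y $ i) = (\<chi> i. of_nat (Suc n) * y $ i)"
    by (simp add: vec_eq_iff algebra_simps)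
  show ?case using Suc by (simp only: power_Suc theta_mult e)
qed

lemma refl_single: "refl_alg a av (Poly_Mapping.single y c) = Poly_Mapping.single (sref a av y) c"
  by (simp add: refl_alg_def cst_def theta_def mult_single)

lemma refl_zero: "refl_alg a av 0 = 0"
  by (simp add: refl_alg_def)

lemma pairing_add: "pairing a (y + z) = pairing a y + pairing a z"
  by (simp add: pairing_def algebra_simps sum.distrib)

lemma pairing_neg: "pairing a (- y) = - pairing a y"
  by (simp add: pairing_def sum_negf)

lemma pairing_smul: "pairing a (\<chi> i. M * y $ i) = M * pairing a y"
  by (simp add: pairing_def sum_distrib_left algebra_simps)

lemma pairing_half:
  assumes "pairing a av = 2" "yv + yv = (\<chi> i. M * av $ i)"
  shows "pairing a yv = M"
proof -
  have "pairing a (yv + yv) = M * 2" using assms by (simp add: pairing_smul)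
  then have "pairing a yv + pairing a yv = M * 2" by (simp only: pairing_add)
  then show ?thesis by linarith
qed

lemma sref_half:
  assumes "pairing a av = 2" "yv + yv = (\<chi> i. M * av $ i)"
  shows "sref a av (- yv) = yv"
proof -
  have p: "pairing a (- yv) = - M" using pairing_half[OF assms] by (simp add: pairing_neg)
  have "yv $ i + yv $ i = M * av $ i" for i using assms(2) by (metis vector_add_component vec_lambda_beta)
  then show ?thesis by (simp add: sref_def p vec_eq_iff algebra_simps)
qed

lemma av_half: "(av :: int ^ 'n) + av = (\<chi> i. 2 * av $ i)"
  by (simp add: vec_eq_iff)

lemma nonzero_of_pairing: "pairing a av = 2 \<Longrightarrow> av \<noteq> 0"
  by (auto simp: pairing_def)

lemma Delta_eqI:
  fixes av :: "int ^ 'n"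
  assumes "av \<noteq> 0"
    and "h * (theta 0 - theta (- (av + av))) =
      (cst (of_real (q1 - 1)) + theta (- av) * cst (of_real (sqrt q1 * sqrt q0 - sqrt q1 / sqrt q0)))
      * (f - refl_alg a av f)"
  shows "Delta a av q1 q0 f = h"
  unfolding Delta_def
proof (rule the_equality)
  fix h'
  assume h': "h' * (theta 0 - theta (- (av + av))) =
      (cst (of_real (q1 - 1)) + theta (- av) * cst (of_real (sqrt q1 * sqrt q0 - sqrt q1 / sqrt q0)))
      * (f - refl_alg a av f)"
  have nz: "- (av + av) \<noteq> 0" using assms(1) by (auto simp: vec_eq_iff)
  have "(h' - h) * (1 - Poly_Mapping.single (- (av + av)) 1) = 0"
    using h' assms(2) by (simp add: theta_def left_diff_distrib)
  then have "h' - h = 0" by (rule zd[OF nz])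
  then show "h' = h" by simp
qed (rule assms(2))

lemma Delta_zero:
  fixes av :: "int ^ 'n"
  assumes "av \<noteq> 0"
  shows "Delta a av q1 q0 0 = 0"
  by (rule Delta_eqI[OF assms]) (simp add: refl_zero)


lemma cst_theta: "cst c * theta y = Poly_Mapping.single y c"
  by (simp add: cst_def theta_def mult_single)

lemma Delta_H:
  fixes av :: "int ^ 'n"
  assumes pa: "pairing a av = 2"
  shows "Delta a av q1 q0 (theta av) =
    cst (of_real (q1 - 1)) * theta av + cst (of_real (sqrt q1 * sqrt q0 - sqrt q1 / sqrt q0))"
proof (rule Delta_eqI[OF nonzero_of_pairing[OF pa]])
  have s: "sref a av av = - av"
    using sref_half[OF pa, of "- av" "- 2"] by (simp add: vec_eq_iff)
  have r: "refl_alg a av (theta av) = theta (- av)"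
    by (simp add: theta_def refl_single s)
  have uv: "theta av * theta (- av) = 1" by (simp add: theta_mult theta0)
  have vv: "theta (- (av + av)) = theta (- av) * theta (- av)" by (simp add: theta_mult)
  define A :: "int ^ 'n \<Rightarrow>\<^sub>0 complex" where "A = cst (complex_of_real (q1 - 1))"
  define B :: "int ^ 'n \<Rightarrow>\<^sub>0 complex" where "B = cst (complex_of_real (sqrt q1 * sqrt q0 - sqrt q1 / sqrt q0))"
  define u where "u = theta av"
  define v where "v = theta (- av)"
  have uv': "u * v = 1" using uv by (simp add: u_def v_def)
  have "(A * u + B) * (1 - v * v) = A * u - A * (u * v) * v + B - B * v * v"
    by (simp add: algebra_simps)
  also have "\<dots> = A * u - A * v + B * (u * v) - B * v * v" using uv' by simp
  also have "\<dots> = (A + v * B) * (u - v)" by (simp add: algebra_simps)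
  finally have key: "(A * u + B) * (1 - v * v) = (A + v * B) * (u - v)" .
  show "(A * theta av + B) * (theta 0 - theta (- (av + av))) =
    (A + theta (- av) * B) * (theta av - refl_alg a av (theta av))"
    using key unfolding r vv theta0 u_def v_def .
qed

lemma Delta_H':
  fixes av :: "int ^ 'n"
  assumes pa: "pairing a av = 2" and yv: "yv + yv = (\<chi> i. N * av $ i)" and N: "N > 0" and p: "p > 0"
  shows "Delta a av p p (Poly_Mapping.single yv d) =
    Poly_Mapping.single yv (d * of_real (p - 1)) * (\<Sum>j<nat N. theta (- av) ^ j)"
proof (rule Delta_eqI[OF nonzero_of_pairing[OF pa]])
  have yv2: "(- yv) + (- yv) = (\<chi> i. (- N) * av $ i)" using yv by (simp add: vec_eq_iff)
  have s: "sref a av yv = - yv"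
    using sref_half[OF pa yv2] by simp
  have r: "refl_alg a av (Poly_Mapping.single yv d) = Poly_Mapping.single (- yv) d"
    by (simp add: refl_single s)
  have comp: "yv $ i + yv $ i = N * av $ i" for i using yv by (metis vector_add_component vec_lambda_beta)
  have ev: "yv + (\<chi> i. of_nat (nat N) * (- av) $ i) = - yv"
    using N comp by (simp add: vec_eq_iff algebra_simps)
  have un: "Poly_Mapping.single (- yv) d = Poly_Mapping.single yv d * theta (- av) ^ nat N"
    unfolding theta_pow unfolding theta_def mult_single ev by simp
  have vv: "theta (- (av + av)) = theta (- av) * theta (- av)" by (simp add: theta_mult)
  have x: "sqrt p * sqrt p - sqrt p / sqrt p = p - 1" using p by simp
  have sy: "Poly_Mapping.single yv (d * of_real (p - 1)) = cst (of_real (p - 1)) * Poly_Mapping.single yv d"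
    by (simp add: cst_def mult_single mult.commute)
  define C :: "int ^ 'n \<Rightarrow>\<^sub>0 complex" where "C = cst (complex_of_real (p - 1))"
  define Y where "Y = Poly_Mapping.single yv d"
  define u where "u = theta (- av)"
  define S where "S = (\<Sum>j<nat N. u ^ j)"
  have geo: "1 - u ^ nat N = (1 - u) * S" unfolding S_def by (rule one_diff_power_eq)
  have "(C * Y * S) * (1 - u * u) = (C + u * C) * (Y - Y * u ^ nat N)"
  proof -
    have "(C + u * C) * (Y - Y * u ^ nat N) = C * Y * (1 + u) * (1 - u ^ nat N)"
      by (simp add: algebra_simps)
    also have "\<dots> = C * Y * (1 + u) * ((1 - u) * S)" by (simp add: geo)
    finally show ?thesis by (simp add: algebra_simps)
  qed
  note key = this
  show "Poly_Mapping.single yv (d * of_real (p - 1)) * (\<Sum>j<nat N. theta (- av) ^ j) *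
      (theta 0 - theta (- (av + av))) =
    (cst (of_real (p - 1)) + theta (- av) * cst (of_real (sqrt p * sqrt p - sqrt p / sqrt p))) *
    (Poly_Mapping.single yv d - refl_alg a av (Poly_Mapping.single yv d))"
    using key unfolding x sy r un vv theta0 C_def Y_def u_def S_def .
qed


lemma ev_sum: "ev \<sigma> (sum f A) = (\<Sum>x\<in>A. ev \<sigma> (f x))"
  by (induction A rule: infinite_finite_induct) (simp_all add: ev_add)

lemma main:
  fixes a av :: "int ^ 'n" and a' av' :: "int ^ 'm" and q1 q0 p :: real
    and I :: "'n hecke \<Rightarrow> 'm hecke"
  assumes pa: "pairing a av = 2" and pa': "pairing a' av' = 2" and q1: "q1 > 1" and p: "p > 1"
    and hom: "is_alg_hom (hmult a av q1 q0) (hmult a' av' p p) I"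
    and c'0: "c' \<noteq> 0" and K: "odd K" and yk: "yk + yk = (\<chi> i. K * av' $ i)"
    and IT0: "I hT = hadd (hmult a' av' p p (hscale c' (htheta yk)) hT) (b', 0)"
    and c0: "c \<noteq> 0" and N: "N > 0" and yn: "yn + yn = (\<chi> i. N * av' $ i)"
    and IX0: "I (htheta av) = hscale c (htheta yn)"
  shows False
proof -
  let ?mul = "hmult a av q1 q0" and ?mul' = "hmult a' av' p p"
  have Iadd: "\<And>x z. I (hadd x z) = hadd (I x) (I z)" and Isc: "\<And>c x. I (hscale c x) = hscale c (I x)"
    and Imul: "\<And>x z. I (?mul x z) = ?mul' (I x) (I z)" and Ione: "I hone = hone"
    using hom unfolding is_alg_hom_def by auto
  have avnz: "av \<noteq> 0" and av'nz: "av' \<noteq> 0" using nonzero_of_pairing pa pa' by auto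
  define e where "e = Poly_Mapping.single yk c'"
  have IT: "I hT = (b', e)"
    using IT0 by (simp add: hmult_def hadd_def hscale_def htheta_def hT_def e_def cst_theta theta0)
  have IX: "I (htheta av) = (Poly_Mapping.single yn c, 0)"
    using IX0 by (simp add: hscale_def htheta_def cst_theta)
  have inv: "?mul (htheta av) (htheta (- av)) = hone"
    by (simp add: hmult_def htheta_def hone_def theta_mult)
  obtain g h2 where Ig: "I (htheta (- av)) = (g, h2)" by (cases "I (htheta (- av))")
  have "?mul' (Poly_Mapping.single yn c, 0) (g, h2) = hone"
    using Imul[of "htheta av" "htheta (- av)"] inv Ione IX Ig by simp
  then have g1: "Poly_Mapping.single yn c * g = 1" and h21: "Poly_Mapping.single yn c * h2 = 0"
    by (simp_all add: hmult_def hone_def theta0)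
  have inv': "Poly_Mapping.single (- yn) (1 / c) * Poly_Mapping.single yn c = 1"
    using c0 by (simp add: mult_single)
  have g: "g = Poly_Mapping.single (- yn) (1 / c)"
  proof -
    have "g = (Poly_Mapping.single (- yn) (1 / c) * Poly_Mapping.single yn c) * g"
      by (simp only: inv' mult_1_left)
    also have "\<dots> = Poly_Mapping.single (- yn) (1 / c) * (Poly_Mapping.single yn c * g)"
      by (simp only: mult.assoc)
    finally show ?thesis by (simp only: g1 mult_1_right)
  qed
  have h2: "h2 = 0"
  proof -
    have "h2 = (Poly_Mapping.single (- yn) (1 / c) * Poly_Mapping.single yn c) * h2"
      by (simp only: inv' mult_1_left)
    also have "\<dots> = Poly_Mapping.single (- yn) (1 / c) * (Poly_Mapping.single yn c * h2)"
      by (simp only: mult.assoc)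
    finally show ?thesis by (simp only: h21 mult_zero_right)
  qed
  define xx where "xx = sqrt q1 * sqrt q0 - sqrt q1 / sqrt q0"
  have s1: "sref a av (- av) = av" by (rule sref_half[OF pa av_half])
  have r1: "refl_alg a av (theta (- av)) = theta av"
    unfolding theta_def by (simp add: refl_single s1)
  have r0: "refl_alg a av 1 = 1"
    by (simp add: refl_single sref_def pairing_def flip: single_one zero_vec_def)
  have rel: "?mul (htheta av) hT = hadd (?mul hT (htheta (- av)))
      (hadd (hscale (of_real (q1 - 1)) (htheta av)) (hscale (of_real xx) hone))"
    by (simp add: hmult_def htheta_def hT_def hadd_def hscale_def hone_def r1 r0 theta0 refl_zero
      Delta_zero[OF avnz] Delta_H[OF pa] xx_def)
  have rel2: "?mul' (Poly_Mapping.single yn c, 0) (b', e) = hadd (?mul' (b', e) (Poly_Mapping.single (- yn) (1 / c), 0))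
      (hadd (hscale (of_real (q1 - 1)) (Poly_Mapping.single yn c, 0)) (hscale (of_real xx) hone))"
    using arg_cong[OF rel, of I] IX IT Ig g h2 by (simp add: Imul Iadd Isc Ione)
  have s2: "sref a' av' (- yn) = yn" by (rule sref_half[OF pa' yn])
  define S where "S = (\<Sum>j<nat N. theta (- av') ^ j)"
  have D: "Delta a' av' p p (Poly_Mapping.single yn (1 / c)) =
    Poly_Mapping.single yn (1 / c * of_real (p - 1)) * S"
    unfolding S_def by (rule Delta_H'[OF pa' yn N]) (use p in simp)
  have key: "ev \<sigma> (fst (?mul' (Poly_Mapping.single yn c, 0) (b', e))) = 
     ev \<sigma> (fst (hadd (?mul' (b', e) (Poly_Mapping.single (- yn) (1 / c), 0))
      (hadd (hscale (of_real (q1 - 1)) (Poly_Mapping.single yn c, 0)) (hscale (of_real xx) hone))))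
    \<and> ev \<sigma> (snd (?mul' (Poly_Mapping.single yn c, 0) (b', e))) = 
     ev \<sigma> (snd (hadd (?mul' (b', e) (Poly_Mapping.single (- yn) (1 / c), 0))
      (hadd (hscale (of_real (q1 - 1)) (Poly_Mapping.single yn c, 0)) (hscale (of_real xx) hone))))"
    for \<sigma> using rel2 by simp
  have key2: "c * \<sigma> yn * ev \<sigma> b' = ev \<sigma> b' * \<sigma> (- yn) / c
       - c' * \<sigma> yk * (of_real p - 1) / c * \<sigma> yn * of_nat (nat N) + (of_real q1 - 1) * c * \<sigma> yn + of_real xx
     \<and> c * \<sigma> yn * c' * \<sigma> yk = c' * \<sigma> yk * \<sigma> yn / c"
    if s0: "\<sigma> 0 = 1" and sh: "\<And>x y. \<sigma> (x + y) = \<sigma> x * \<sigma> y" and sv: "\<sigma> (- av') = 1"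
    for \<sigma> :: "int ^ 'm \<Rightarrow> complex"
  proof -
    have evS: "ev \<sigma> S = of_nat (nat N)"
      unfolding S_def by (simp add: ev_sum ev_power[OF sh s0] theta_def sv)
    show ?thesis
    using key[of \<sigma>] apply (simp add: hmult_def hadd_def hscale_def hone_def refl_single s2 refl_zero
      Delta_zero[OF av'nz] D ev_add ev_diff ev_mult[OF sh] evS cst_def theta_def e_def s0 algebra_simps)
    by (simp add: diff_divide_distrib algebra_simps)
  qed
  define n where "n = (of_nat (nat N) :: complex)"
  have n0: "n \<noteq> 0" using N by (simp add: n_def)
  have p1: "(of_real p - 1 :: complex) \<noteq> 0" using p by (metis less_irrefl of_real_1 of_real_eq_iff right_minus_eq)
  have q11: "(of_real q1 - 1 :: complex) \<noteq> 0" using q1 by (metis less_irrefl of_real_1 of_real_eq_iff right_minus_eq)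
  have E1: "c * ev (\<lambda>_. 1) b' = ev (\<lambda>_. 1) b' / c - c' * (of_real p - 1) / c * n + (of_real q1 - 1) * c + of_real xx"
    and F1: "c * c' = c' / c"
    using key2[of "\<lambda>_. 1"] by (simp_all add: n_def)
  have cc: "c * c = 1" using F1 c0 c'0 by (simp add: field_simps)
  have dv: "x / c = x * c" for x
  proof -
    have "x / c = x * c * (1 / (c * c))" using c0 by (simp add: field_simps)
    then show ?thesis by (simp add: cc)
  qed
  define \<sigma> where "\<sigma> y = (if even (pairing a' y) then 1 else - 1 :: complex)" for y :: "int ^ 'm"
  have s0: "\<sigma> 0 = 1" by (simp add: \<sigma>_def pairing_def)
  have sh: "\<sigma> (x + y) = \<sigma> x * \<sigma> y" for x y by (simp add: \<sigma>_def pairing_add)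
  have sv: "\<sigma> (- av') = 1" by (simp add: \<sigma>_def pairing_neg pa')
  have sk: "\<sigma> yk = - 1" using K by (simp add: \<sigma>_def pairing_half[OF pa' yk])
  have sn: "\<sigma> (- yn) = \<sigma> yn" by (simp add: \<sigma>_def pairing_neg)
  have E2: "c * \<sigma> yn * ev \<sigma> b' = ev \<sigma> b' * \<sigma> yn / c
       + c' * (of_real p - 1) / c * \<sigma> yn * n + (of_real q1 - 1) * c * \<sigma> yn + of_real xx"
    using key2[OF s0 sh sv] by (simp add: sk sn n_def)
  define X where "X = c' * (of_real p - 1) * c * n"
  define R where "R = (of_real q1 - 1) * c"
  have E1': "0 = - X + R + of_real xx"
    using E1 by (simp add: dv X_def R_def algebra_simps)
  have E2': "0 = (X + R) * \<sigma> yn + of_real xx"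
    using E2 by (simp add: dv X_def R_def algebra_simps)
  have X0: "X \<noteq> 0" using c0 c'0 n0 p1 by (simp add: X_def)
  have R0: "R \<noteq> 0" using c0 q11 by (simp add: R_def)
  show False
  proof (cases "even N")
    case True
    then have "\<sigma> yn = 1" by (simp add: \<sigma>_def pairing_half[OF pa' yn])
    then have e2: "0 = X + R + of_real xx" using E2' by simp
    have "2 * X = (X + R + of_real xx) - (- X + R + of_real xx)" by (simp add: algebra_simps)
    also have "\<dots> = 0" using E1' e2 by simp
    finally show False using X0 by simp
  next
    case False
    then have "\<sigma> yn = - 1" by (simp add: \<sigma>_def pairing_half[OF pa' yn])
    then have e2: "0 = - X - R + of_real xx" using E2' by (simp add: algebra_simps)
    have "2 * R = (- X + R + of_real xx) - (- X - R + of_real xx)" by (simp add: algebra_simps)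
    also have "\<dots> = 0" using E1' e2 by simp
    finally show False using R0 by simp
  qed
qed


theorem lemmaD4:
  fixes a av :: "int ^ 'n" and a' av' :: "int ^ 'm"
    and qq lam lamS lam' lamS' :: real
  assumes "pairing a av = 2" and "pairing a' av' = 2"
    and "lam > 0" and "lamS > 0" and "lam' > 0" and "lamS' > 0"
    and "\<not> (\<exists>x. a = x + x) \<Longrightarrow> lam = lamS"
    and "\<not> (\<exists>x. a' = x + x) \<Longrightarrow> lam' = lamS'"
    and "qq > 1"
  shows "\<not> (\<exists>I :: 'n hecke \<Rightarrow> 'm hecke.
     is_alg_hom (hmult a av (qq powr lam) (qq powr lamS))
                (hmult a' av' (qq powr lam') (qq powr lamS')) I \<and>
     (\<exists>c' b' (K :: int) yk. c' \<noteq> 0 \<and> odd K \<and> yk + yk = (\<chi> i. K * av' $ i) \<and>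
        I hT = hadd (hmult a' av' (qq powr lam') (qq powr lamS') (hscale c' (htheta yk)) hT) (b', 0)) \<and>
     (\<exists>c (N :: int) yn. c \<noteq> 0 \<and> N > 0 \<and> yn + yn = (\<chi> i. N * av' $ i) \<and>
        I (htheta av) = hscale c (htheta yn)))"
proof
  assume "\<exists>I :: 'n hecke \<Rightarrow> 'm hecke.
     is_alg_hom (hmult a av (qq powr lam) (qq powr lamS))
                (hmult a' av' (qq powr lam') (qq powr lamS')) I \<and>
     (\<exists>c' b' (K :: int) yk. c' \<noteq> 0 \<and> odd K \<and> yk + yk = (\<chi> i. K * av' $ i) \<and>
        I hT = hadd (hmult a' av' (qq powr lam') (qq powr lamS') (hscale c' (htheta yk)) hT) (b', 0)) \<and>
     (\<exists>c (N :: int) yn. c \<noteq> 0 \<and> N > 0 \<and> yn + yn = (\<chi> i. N * av' $ i) \<and>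
        I (htheta av) = hscale c (htheta yn))"
  then obtain I c' b' K yk c N yn where
    hom: "is_alg_hom (hmult a av (qq powr lam) (qq powr lamS))
                (hmult a' av' (qq powr lam') (qq powr lamS')) I"
    and c'0: "c' \<noteq> 0" and K: "odd K" and yk: "yk + yk = (\<chi> i. K * av' $ i)"
    and IT0: "I hT = hadd (hmult a' av' (qq powr lam') (qq powr lamS') (hscale c' (htheta yk)) hT) (b', 0)"
    and c0: "c \<noteq> 0" and N: "N > 0" and yn: "yn + yn = (\<chi> i. N * av' $ i)"
    and IX0: "I (htheta av) = hscale c (htheta yn)"
    by blast
  have pk: "pairing a' yk = K" by (rule pairing_half[OF assms(2) yk])
  have "\<not> (\<exists>x. a' = x + x)"
  proof
    assume "\<exists>x. a' = x + x"
    then obtain x where x: "a' = x + x" by blast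
    have "pairing (x + x) yk = 2 * pairing x yk"
      by (simp add: pairing_def sum_distrib_left algebra_simps)
    then have "K = 2 * pairing x yk" using pk x by simp
    then have "even K" by simp
    then show False using K by simp
  qed
  then have l: "lamS' = lam'" using assms(8) by simp
  show False
    using main[OF assms(1,2) _ _ hom[unfolded l] c'0 K yk IT0[unfolded l] c0 N yn IX0]
      gr_one_powr[OF assms(9) assms(3)] gr_one_powr[OF assms(9) assms(5)] by blast
qed

end
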